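(* With the setup in the context, suppose $Q>2m$ and let $\varphi_1,\varphi_2$ be unit eigenvectors of $H$ for its two largest eigenvalues $\lambda_1>\lambda_2$. If $\varphi_1(v)^2+\varphi_2(v)^2\ge\frac12$, then at time $t=\frac{\pi}{\lambda_1-\lambda_2}$, $$p(t)\ \ge\ \big(2\varphi_1(v)^2+2\varphi_2(v)^2-1\big)^2.$$
   Context: $G$ is a finite, simple, connected graph with vertex set $V$, maximum degree $m$, and an involution $\sigma$ (a bijection $V\to V$ with $\sigma\circ\sigma=\mathrm{id}$ such that $x\sim y$ implies $\sigma(x)\sim\sigma(y)$). Fix $v\in V$ with $v':=\sigma(v)\ne v$, and let $H=A_G+D_Q$ be the adjacency matrix plus the diagonal potential matrix, with potential $Q$ at $v$ and $v'$ and $0$ elsewhere. The transfer probability is $p(t)=|\langle e_v,e^{itH}e_{v'}\rangle|^2$, where $e_x$ is the standard basis vector of vertex $x$. *)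

theory Defs
  imports "HOL-Analysis.Analysis"
begin

definition simple_graph :: "('n \<Rightarrow> 'n \<Rightarrow> bool) \<Rightarrow> bool" where
  "simple_graph E \<longleftrightarrow> (\<forall>x y. E x y \<longrightarrow> E y x) \<and> (\<forall>x. \<not> E x x)"

definition connected_graph :: "('n \<Rightarrow> 'n \<Rightarrow> bool) \<Rightarrow> bool" where
  "connected_graph E \<longleftrightarrow> (\<forall>x y. E\<^sup>*\<^sup>* x y)"

definition degree :: "('n::finite \<Rightarrow> 'n \<Rightarrow> bool) \<Rightarrow> 'n \<Rightarrow> nat" where
  "degree E x = card {y. E x y}"

definition max_degree :: "('n::finite \<Rightarrow> 'n \<Rightarrow> bool) \<Rightarrow> nat" where
  "max_degree E = Max (range (degree E))"

definition graph_involution :: "('n \<Rightarrow> 'n \<Rightarrow> bool) \<Rightarrow> ('n \<Rightarrow> 'n) \<Rightarrow> bool" where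
  "graph_involution E \<sigma> \<longleftrightarrow> bij \<sigma> \<and> (\<forall>x. \<sigma> (\<sigma> x) = x) \<and> (\<forall>x y. E x y \<longrightarrow> E (\<sigma> x) (\<sigma> y))"

definition hamiltonian ::
  "('n::finite \<Rightarrow> 'n \<Rightarrow> bool) \<Rightarrow> ('n \<Rightarrow> 'n) \<Rightarrow> 'n \<Rightarrow> real \<Rightarrow> real^'n^'n" where
  "hamiltonian E \<sigma> v Q =
     (\<chi> i j. (if E i j then 1 else 0) + (if i = j \<and> (i = v \<or> i = \<sigma> v) then Q else 0))"

definition matpow :: "real^'n^'n \<Rightarrow> nat \<Rightarrow> real^'n^'n" where
  "matpow A k = ((\<lambda>B. A ** B) ^^ k) (mat 1)"

definition exp_itH_entry :: "real^'n^'n \<Rightarrow> real \<Rightarrow> 'n \<Rightarrow> 'n \<Rightarrow> complex" where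
  "exp_itH_entry H t x y =
     (\<Sum>k. (\<i> * complex_of_real t) ^ k / of_nat (fact k) * complex_of_real (matpow H k $ x $ y))"

definition transfer_prob :: "real^'n^'n \<Rightarrow> 'n \<Rightarrow> 'n \<Rightarrow> real \<Rightarrow> real" where
  "transfer_prob H v v' t = (cmod (exp_itH_entry H t v v'))\<^sup>2"

definition is_eigenvalue :: "real^'n^'n \<Rightarrow> real \<Rightarrow> bool" where
  "is_eigenvalue H c \<longleftrightarrow> (\<exists>x. x \<noteq> 0 \<and> H *v x = c *\<^sub>R x)"

end

theory Submission
  imports Defs
begin


definition symm :: "real^'n^'n \<Rightarrow> bool" where
  "symm H \<longleftrightarrow> (\<forall>i j. H$i$j = H$j$i)"

lemma symm_inner:
  fixes H :: "real^'n::finite^'n"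
  assumes "symm H" shows "(H *v x) \<bullet> y = x \<bullet> (H *v y)"
proof -
  have "(H *v x) \<bullet> y = (\<Sum>i\<in>UNIV. \<Sum>j\<in>UNIV. H$i$j * x$j * y$i)"
    by (simp add: inner_vec_def matrix_vector_mult_def sum_distrib_left mult_ac)
  also have "\<dots> = (\<Sum>j\<in>UNIV. \<Sum>i\<in>UNIV. H$i$j * x$j * y$i)" by (rule sum.swap)
  also have "\<dots> = x \<bullet> (H *v y)"
    using assms by (simp add: symm_def inner_vec_def matrix_vector_mult_def sum_distrib_left mult_ac)
  finally show ?thesis .
qed

lemma max_eig:
  fixes H :: "real^'n::finite^'n"
  assumes sy: "symm H" and S: "subspace S" and inv: "\<And>x. x \<in> S \<Longrightarrow> H *v x \<in> S"
    and ne: "S \<noteq> {0}"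
  shows "\<exists>x\<in>S. norm x = 1 \<and> H *v x = (x \<bullet> (H *v x)) *\<^sub>R x \<and>
           (\<forall>y\<in>S. y \<bullet> (H *v y) \<le> (x \<bullet> (H *v x)) * (norm y)\<^sup>2)"
proof -
  let ?f = "\<lambda>y. y \<bullet> (H *v y)"
  let ?K = "sphere 0 1 \<inter> S"
  have "compact ?K" using closed_subspace[OF S] compact_sphere
    by (simp add: compact_Int_closed)
  moreover obtain z where z: "z \<in> S" "z \<noteq> 0" using ne S subspace_0 by blast
  then have "z /\<^sub>R norm z \<in> ?K" using S by (simp add: subspace_scale)
  then have "?K \<noteq> {}" by blast
  moreover have "continuous_on ?K ?f"
    by (intro continuous_on_inner continuous_on_id matrix_vector_mult_linear_continuous_on)
  ultimately obtain x where x: "x \<in> ?K" and mx: "\<And>y. y \<in> ?K \<Longrightarrow> ?f y \<le> ?f x"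
    using continuous_attains_sup by metis
  define l where "l = ?f x"
  have xS: "x \<in> S" and nx: "norm x = 1" using x by auto
  have bound: "?f y \<le> l * (norm y)\<^sup>2" if "y \<in> S" for y
  proof (cases "y = 0")
    case True then show ?thesis by simp
  next
    case False
    have "y /\<^sub>R norm y \<in> ?K" using that S False by (simp add: subspace_scale)
    then have "?f (y /\<^sub>R norm y) \<le> l" using mx l_def by blast
    moreover have "?f (y /\<^sub>R norm y) = ?f y / (norm y)\<^sup>2"
      by (simp add: matrix_vector_mult_scaleR power2_eq_square divide_inverse)
    ultimately show ?thesis using False
      by (simp add: divide_le_eq mult.commute)
  qed
  define w where "w = H *v x - l *\<^sub>R x"
  have wS: "w \<in> S" unfolding w_def using inv xS S by (simp add: subspace_diff subspace_scale)
  have xx: "x \<bullet> x = 1" using nx by (simp add: norm_eq_1)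
  have xw: "x \<bullet> w = 0" unfolding w_def l_def by (simp add: inner_diff_right xx)
  have wHx: "w \<bullet> (H *v x) = w \<bullet> w"
  proof -
    have "H *v x = w + l *\<^sub>R x" by (simp add: w_def)
    then show ?thesis using xw by (simp add: inner_add_right inner_commute)
  qed
  have "w = 0"
  proof (rule ccontr)
    assume wn: "w \<noteq> 0"
    define D where "D = l * (w \<bullet> w) - ?f w"
    have D0: "D \<ge> 0" using bound[OF wS] by (simp add: D_def power2_norm_eq_inner)
    have ww: "w \<bullet> w > 0" using wn by simp
    define t where "t = (w \<bullet> w) / (D + 1)"
    have t0: "t > 0" using ww D0 by (simp add: t_def)
    have "x + t *\<^sub>R w \<in> S" using xS wS S by (simp add: subspace_add subspace_scale)
    from bound[OF this] have
      "?f (x + t *\<^sub>R w) \<le> l * ((x + t *\<^sub>R w) \<bullet> (x + t *\<^sub>R w))"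
      by (simp add: power2_norm_eq_inner)
    moreover have "?f (x + t *\<^sub>R w) = ?f x + 2 * t * (w \<bullet> (H *v x)) + t * t * ?f w"
    proof -
      have "x \<bullet> (H *v w) = w \<bullet> (H *v x)"
        using symm_inner[OF sy, of w x] by (simp add: inner_commute)
      then show ?thesis
        by (simp add: matrix_vector_right_distrib matrix_vector_mult_scaleR inner_add_left
            inner_add_right algebra_simps)
    qed
    moreover have "(x + t *\<^sub>R w) \<bullet> (x + t *\<^sub>R w) = 1 + t * t * (w \<bullet> w)"
      using xx xw by (simp add: inner_add_left inner_add_right inner_commute algebra_simps)
    ultimately have "l + 2 * t * (w \<bullet> w) + t * t * ?f w \<le> l * (1 + t * t * (w \<bullet> w))"
      using wHx l_def by simp
    then have "2 * t * (w \<bullet> w) \<le> t * t * D" by (simp add: D_def algebra_simps)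
    then have "2 * (w \<bullet> w) \<le> t * D" using t0
      by (metis (no_types, opaque_lifting) mult.assoc mult_le_cancel_left_pos mult.commute)
    moreover have "t * D < w \<bullet> w"
    proof -
      have "t * D = (w \<bullet> w) * (D / (D + 1))" by (simp add: t_def)
      also have "\<dots> < (w \<bullet> w) * 1" using ww D0 by (intro mult_strict_left_mono) auto
      finally show ?thesis by simp
    qed
    ultimately show False using ww by linarith
  qed
  then have "H *v x = l *\<^sub>R x" by (simp add: w_def)
  then show ?thesis using xS nx bound l_def by auto
qed
lemma spectral:
  fixes H :: "real^'n::finite^'n"
  assumes sy: "symm H"
  shows "subspace S \<Longrightarrow> (\<And>x. x \<in> S \<Longrightarrow> H *v x \<in> S) \<Longrightarrow>
    \<exists>B. B \<subseteq> S \<and> finite B \<and> pairwise orthogonal B \<and>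
       (\<forall>b\<in>B. norm b = 1 \<and> H *v b = (b \<bullet> (H *v b)) *\<^sub>R b) \<and> span B = S"
proof (induction "dim S" arbitrary: S rule: less_induct)
  case less
  show ?case
  proof (cases "S = {0}")
    case True
    then show ?thesis by (intro exI[of _ "{}"]) auto
  next
    case False
    from max_eig[OF sy less.prems(1) less.prems(2) False] obtain x where
      xS: "x \<in> S" and nx: "norm x = 1" and ex: "H *v x = (x \<bullet> (H *v x)) *\<^sub>R x" by blast
    define S' where "S' = S \<inter> {y. x \<bullet> y = 0}"
    have sub': "subspace S'" unfolding S'_def
      by (intro subspace_inter less.prems(1)) (auto simp: subspace_def inner_add_right)
    have inv': "H *v y \<in> S'" if "y \<in> S'" for y
    proof -
      have "x \<bullet> (H *v y) = (H *v x) \<bullet> y" using symm_inner[OF sy] by simp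
      also have "\<dots> = 0" using that by (subst ex) (simp add: S'_def)
      finally show ?thesis using that less.prems(2) by (simp add: S'_def)
    qed
    have "S' \<subseteq> S" by (auto simp: S'_def)
    moreover have "x \<notin> S'" using nx by (auto simp: S'_def norm_eq_1)
    moreover have sp1: "span S' = S'" using sub' span_eq_iff by blast
    moreover have sp2: "span S = S" using less.prems(1) span_eq_iff by blast
    ultimately have "span S' \<subset> span S" using xS by (simp only: sp1 sp2) blast
    then have "dim S' < dim S" by (rule dim_psubset)
    from less.hyps[OF this sub' inv'] obtain B where
      B: "B \<subseteq> S'" "finite B" "pairwise orthogonal B"
        "\<forall>b\<in>B. norm b = 1 \<and> H *v b = (b \<bullet> (H *v b)) *\<^sub>R b" "span B = S'" by blast
    have xB: "x \<notin> B" using B(1) \<open>x \<notin> S'\<close> by blast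
    show ?thesis
    proof (intro exI[of _ "insert x B"] conjI)
      show "insert x B \<subseteq> S" using B(1) xS by (auto simp: S'_def)
      show "finite (insert x B)" using B(2) by simp
      show "pairwise orthogonal (insert x B)" using B(3) B(1)
        by (auto simp: pairwise_insert S'_def orthogonal_def inner_commute)
      show "\<forall>b\<in>insert x B. norm b = 1 \<and> H *v b = (b \<bullet> (H *v b)) *\<^sub>R b"
        using B(4) nx ex by auto
      show "span (insert x B) = S"
      proof
        show "span (insert x B) \<subseteq> S"
          using \<open>insert x B \<subseteq> S\<close> less.prems(1) by (simp add: span_minimal)
        show "S \<subseteq> span (insert x B)"
        proof
          fix y assume y: "y \<in> S"
          have "y - (x \<bullet> y) *\<^sub>R x \<in> S'" using y xS less.prems(1) nx
            by (simp add: S'_def subspace_diff subspace_scale inner_diff_right norm_eq_1)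
          then show "y \<in> span (insert x B)" using B(5) by (auto simp: span_breakdown_eq)
        qed
      qed
    qed
  qed
qed


lemma expand:
  fixes B :: "(real^'n::finite) set"
  assumes fin: "finite B" and po: "pairwise orthogonal B" and n1: "\<forall>b\<in>B. norm b = 1"
    and sp: "span B = UNIV"
  shows "x = (\<Sum>b\<in>B. (b \<bullet> x) *\<^sub>R b)"
proof -
  define d where "d = x - (\<Sum>b\<in>B. (b \<bullet> x) *\<^sub>R b)"
  have "orthogonal d c" if c: "c \<in> B" for c
  proof -
    have "(\<Sum>b\<in>B. (b \<bullet> x) * (c \<bullet> b)) = (c \<bullet> x) * (c \<bullet> c) + (\<Sum>b\<in>B-{c}. (b \<bullet> x) * (c \<bullet> b))"
      using fin c by (simp add: sum.remove)
    also have "(\<Sum>b\<in>B-{c}. (b \<bullet> x) * (c \<bullet> b)) = 0"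
      using po c by (intro sum.neutral) (auto simp: pairwise_def orthogonal_def)
    also have "c \<bullet> c = 1" using n1 c by (simp add: norm_eq_1)
    finally have "(\<Sum>b\<in>B. (b \<bullet> x) * (c \<bullet> b)) = c \<bullet> x" by simp
    moreover have "c \<bullet> (\<Sum>b\<in>B. (b \<bullet> x) *\<^sub>R b) = (\<Sum>b\<in>B. (b \<bullet> x) * (c \<bullet> b))"
      by (simp add: inner_sum_right)
    ultimately have "orthogonal c d"
      by (simp add: d_def orthogonal_def inner_diff_right)
    then show ?thesis by (simp add: orthogonal_commute)
  qed
  then have "orthogonal d d" using sp orthogonal_to_span[of d B d]
    by (simp add: orthogonal_commute)
  then have "d = 0" using orthogonal_self by blast
  then show ?thesis by (simp add: d_def)
qed

lemma matpow_Suc: "matpow A (Suc k) = A ** matpow A k"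
  by (simp add: matpow_def)

lemma matpow_eig:
  fixes H :: "real^'n::finite^'n"
  assumes "H *v b = c *\<^sub>R b" shows "matpow H k *v b = (c ^ k) *\<^sub>R b"
proof (induction k)
  case 0 then show ?case by (simp add: matpow_def)
next
  case (Suc k)
  have "matpow H (Suc k) *v b = H *v (matpow H k *v b)"
    by (simp add: matpow_Suc matrix_vector_mul_assoc)
  also have "\<dots> = (c ^ Suc k) *\<^sub>R b" using Suc assms
    by (simp add: matrix_vector_mult_scaleR)
  finally show ?case .
qed

lemma entry_axis: "(M *v axis y 1) $ x = M $ x $ y"
proof -
  have "(M *v axis y 1) $ x = (\<Sum>j\<in>UNIV. M$x$j * axis y 1 $ j)"
    by (simp add: matrix_vector_mult_def)
  also have "\<dots> = (\<Sum>j\<in>UNIV. if j = y then M$x$j else 0)"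
    by (intro sum.cong refl) (simp add: axis_def)
  finally show ?thesis by simp
qed

lemma mv_sum: "finite B \<Longrightarrow> (M::real^'n::finite^'m) *v (\<Sum>b\<in>B. f b *\<^sub>R b) = (\<Sum>b\<in>B. f b *\<^sub>R (M *v b))"
  by (induction B rule: finite_induct) (simp_all add: matrix_vector_right_distrib matrix_vector_mult_scaleR)

lemma term1: "(\<i> * complex_of_real t) ^ k / of_nat (fact k) * complex_of_real (c * mu ^ k) =
   complex_of_real c * ((\<i> * complex_of_real (t * mu)) ^ k /\<^sub>R fact k)"
proof -
  have p: "(\<i> * complex_of_real (t * mu)) ^ k = (\<i> * complex_of_real t) ^ k * complex_of_real mu ^ k"
    by (simp add: power_mult_distrib mult_ac)
  show ?thesis
    by (simp add: p scaleR_conv_of_real divide_inverse mult_ac power_mult_distrib)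
qed

lemma entry_expand:
  fixes H :: "real^'n::finite^'n" and B :: "(real^'n) set"
  assumes fin: "finite B" and po: "pairwise orthogonal B"
    and eb: "\<forall>b\<in>B. norm b = 1 \<and> H *v b = (b \<bullet> (H *v b)) *\<^sub>R b"
    and sp: "span B = UNIV"
  shows "exp_itH_entry H t x y =
     (\<Sum>b\<in>B. complex_of_real (b$x * b$y) * exp (\<i> * complex_of_real (t * (b \<bullet> (H *v b)))))"
proof -
  define mu where "mu b = b \<bullet> (H *v b)" for b
  have pw: "matpow H k $ x $ y = (\<Sum>b\<in>B. b$x * b$y * mu b ^ k)" for k
  proof -
    have "axis y 1 = (\<Sum>b\<in>B. (b \<bullet> axis y 1) *\<^sub>R b)"
      using expand[OF fin po] eb sp by blast
    then have "matpow H k *v axis y 1 = matpow H k *v (\<Sum>b\<in>B. (b \<bullet> axis y 1) *\<^sub>R b)"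
      by (rule arg_cong)
    also have "\<dots> = (\<Sum>b\<in>B. (b \<bullet> axis y 1) *\<^sub>R (matpow H k *v b))"
      by (rule mv_sum[OF fin])
    also have "\<dots> = (\<Sum>b\<in>B. (b $ y) *\<^sub>R (matpow H k *v b))"
      by (simp only: inner_axis inner_real_def mult_1_right)
    also have "\<dots> = (\<Sum>b\<in>B. (b $ y * mu b ^ k) *\<^sub>R b)"
    proof (intro sum.cong refl)
      fix b assume "b \<in> B"
      then have "H *v b = mu b *\<^sub>R b" using eb by (simp add: mu_def)
      then have "matpow H k *v b = mu b ^ k *\<^sub>R b" by (rule matpow_eig)
      then show "(b $ y) *\<^sub>R (matpow H k *v b) = (b $ y * mu b ^ k) *\<^sub>R b" by simp
    qed
    finally have "(matpow H k *v axis y 1) $ x = (\<Sum>b\<in>B. b$y * mu b ^ k * b $ x)"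
      by simp
    then show ?thesis by (simp add: entry_axis mult_ac)
  qed
  have trm: "(\<i> * complex_of_real t) ^ k / of_nat (fact k) * complex_of_real (matpow H k $ x $ y)
      = (\<Sum>b\<in>B. complex_of_real (b$x * b$y) * ((\<i> * complex_of_real (t * mu b)) ^ k /\<^sub>R fact k))" for k
  proof -
    have "(\<i> * complex_of_real t) ^ k / of_nat (fact k) * complex_of_real (matpow H k $ x $ y)
      = (\<Sum>b\<in>B. (\<i> * complex_of_real t) ^ k / of_nat (fact k) * complex_of_real (b$x * b$y * mu b ^ k))"
      by (simp only: pw of_real_sum sum_distrib_left)
    also have "\<dots> = (\<Sum>b\<in>B. complex_of_real (b$x * b$y) * ((\<i> * complex_of_real (t * mu b)) ^ k /\<^sub>R fact k))"
      by (intro sum.cong refl term1)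
    finally show ?thesis .
  qed
  have "(\<lambda>k. (\<Sum>b\<in>B. complex_of_real (b$x * b$y) * ((\<i> * complex_of_real (t * mu b)) ^ k /\<^sub>R fact k)))
     sums (\<Sum>b\<in>B. complex_of_real (b$x * b$y) * exp (\<i> * complex_of_real (t * mu b)))"
    by (intro sums_sum sums_mult exp_converges)
  then have "(\<lambda>k. (\<i> * complex_of_real t) ^ k / of_nat (fact k) * complex_of_real (matpow H k $ x $ y))
     sums (\<Sum>b\<in>B. complex_of_real (b$x * b$y) * exp (\<i> * complex_of_real (t * mu b)))"
    by (simp only: trm)
  then show ?thesis unfolding exp_itH_entry_def mu_def by (rule sums_unique[symmetric])
qed


lemma deg_sum:
  fixes E :: "'n::finite \<Rightarrow> 'n \<Rightarrow> bool"
  shows "(\<Sum>j\<in>UNIV. if E i j then 1 else 0) = real (degree E i)"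
proof -
  have "(\<Sum>j\<in>UNIV. if E i j then (1::real) else 0) = (\<Sum>j\<in>{j\<in>UNIV. E i j}. 1)"
    by (rule sum.inter_filter[symmetric]) simp
  then show ?thesis by (simp add: degree_def)
qed

lemma deg_le: "degree E i \<le> max_degree (E :: 'n::finite \<Rightarrow> 'n \<Rightarrow> bool)"
  unfolding max_degree_def by (rule Max_ge) auto

lemma gersh:
  fixes E :: "'n::finite \<Rightarrow> 'n \<Rightarrow> bool" and w :: "real^'n"
  assumes sg: "simple_graph E" and w1: "w $ v = 0" and w2: "w $ \<sigma> v = 0"
  shows "w \<bullet> (hamiltonian E \<sigma> v Q *v w) \<le> real (max_degree E) * (w \<bullet> w)"
proof -
  define m where "m = real (max_degree E)"
  define e where "e i j = (if E i j then 1 else (0::real))" for i j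
  have esym: "e i j = e j i" for i j using sg by (auto simp: e_def simple_graph_def)
  have "w \<bullet> (hamiltonian E \<sigma> v Q *v w) = (\<Sum>i\<in>UNIV. \<Sum>j\<in>UNIV. e i j * w$i * w$j)"
  proof -
    have "w \<bullet> (hamiltonian E \<sigma> v Q *v w) =
        (\<Sum>i\<in>UNIV. \<Sum>j\<in>UNIV. w$i * (hamiltonian E \<sigma> v Q $ i $ j * w$j))"
      by (simp add: inner_vec_def matrix_vector_mult_def sum_distrib_left)
    also have "\<dots> = (\<Sum>i\<in>UNIV. \<Sum>j\<in>UNIV. e i j * w$i * w$j)"
      by (intro sum.cong refl) (auto simp: hamiltonian_def e_def w1 w2 algebra_simps)
    finally show ?thesis .
  qed
  also have "\<dots> \<le> (\<Sum>i\<in>UNIV. \<Sum>j\<in>UNIV. e i j * ((w$i)\<^sup>2 + (w$j)\<^sup>2) / 2)"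
  proof (intro sum_mono)
    fix i j
    have "w$i * w$j \<le> ((w$i)\<^sup>2 + (w$j)\<^sup>2) / 2"
      using sum_squares_bound[of "w$i" "w$j"] by simp
    moreover have "e i j \<ge> 0" by (simp add: e_def)
    ultimately show "e i j * w$i * w$j \<le> e i j * ((w$i)\<^sup>2 + (w$j)\<^sup>2) / 2"
      by (metis mult.assoc mult_left_mono times_divide_eq_right)
  qed
  also have "\<dots> = ((\<Sum>i\<in>UNIV. \<Sum>j\<in>UNIV. e i j * (w$i)\<^sup>2) + (\<Sum>i\<in>UNIV. \<Sum>j\<in>UNIV. e i j * (w$j)\<^sup>2)) / 2"
    by (simp add: sum.distrib sum_divide_distrib[symmetric] algebra_simps)
  also have "(\<Sum>i\<in>UNIV. \<Sum>j\<in>UNIV. e i j * (w$j)\<^sup>2) = (\<Sum>i\<in>UNIV. \<Sum>j\<in>UNIV. e i j * (w$i)\<^sup>2)"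
    by (subst sum.swap) (simp add: esym)
  also have "(\<Sum>i\<in>UNIV. \<Sum>j\<in>UNIV. e i j * (w$i)\<^sup>2) = (\<Sum>i\<in>UNIV. real (degree E i) * (w$i)\<^sup>2)"
    by (simp add: sum_distrib_right[symmetric] e_def deg_sum)
  also have "\<dots> \<le> (\<Sum>i\<in>UNIV. m * (w$i)\<^sup>2)"
    by (intro sum_mono mult_right_mono) (auto simp: m_def deg_le)
  also have "\<dots> = m * (w \<bullet> w)"
    by (simp add: inner_vec_def sum_distrib_left power2_eq_square)
  finally show ?thesis by (simp add: m_def mult.commute)
qed


lemma parseval:
  fixes B :: "(real^'n::finite) set"
  assumes fin: "finite B" and po: "pairwise orthogonal B" and n1: "\<forall>b\<in>B. norm b = 1"
    and sp: "span B = UNIV"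
  shows "(\<Sum>b\<in>B. (b$x)\<^sup>2) = 1"
proof -
  define e :: "real^'n" where "e = axis x 1"
  have ex: "e = (\<Sum>b\<in>B. (b \<bullet> e) *\<^sub>R b)" using expand[OF fin po n1 sp] by blast
  have "1 = e \<bullet> e" by (simp add: e_def)
  also have "\<dots> = e \<bullet> (\<Sum>b\<in>B. (b \<bullet> e) *\<^sub>R b)" using ex by simp
  also have "\<dots> = (\<Sum>b\<in>B. (b \<bullet> e) * (e \<bullet> b))" by (simp add: inner_sum_right)
  also have "\<dots> = (\<Sum>b\<in>B. (b$x)\<^sup>2)"
    by (intro sum.cong refl) (simp add: e_def inner_axis inner_commute[of "axis x 1"] power2_eq_square)
  finally show ?thesis by simp
qed

lemma axis_H: "axis i 1 \<bullet> ((M::real^'n::finite^'n) *v axis j 1) = M$i$j"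
  by (simp add: inner_commute[of "axis i 1"] inner_axis entry_axis)

lemma reind: "bij (s::'n::finite \<Rightarrow> 'n) \<Longrightarrow> (\<Sum>j\<in>UNIV. f (s j)) = (\<Sum>j\<in>UNIV. (f j :: real))"
  by (rule sum.reindex_bij_betw) (simp add: bij_def bij_betw_def)

theorem mainTheorem8:
  fixes E :: "'n::finite \<Rightarrow> 'n \<Rightarrow> bool" and \<sigma> :: "'n \<Rightarrow> 'n" and v :: 'n
    and Q l1 l2 :: real and \<phi>1 \<phi>2 :: "real^'n"
  defines "H \<equiv> hamiltonian E \<sigma> v Q"
  assumes "simple_graph E" and "connected_graph E"
    and "graph_involution E \<sigma>" and "\<sigma> v \<noteq> v"
    and "Q > 2 * real (max_degree E)"
    and "H *v \<phi>1 = l1 *\<^sub>R \<phi>1" and "norm \<phi>1 = 1"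
    and "H *v \<phi>2 = l2 *\<^sub>R \<phi>2" and "norm \<phi>2 = 1"
    and "l2 < l1"
    and "\<And>x. H *v x = l1 *\<^sub>R x \<Longrightarrow> \<exists>c. x = c *\<^sub>R \<phi>1"
    and "\<And>\<mu>. is_eigenvalue H \<mu> \<Longrightarrow> \<mu> = l1 \<or> \<mu> \<le> l2"
    and "(\<phi>1 $ v)\<^sup>2 + (\<phi>2 $ v)\<^sup>2 \<ge> 1/2"
  shows "transfer_prob H v (\<sigma> v) (pi / (l1 - l2))
           \<ge> (2 * (\<phi>1 $ v)\<^sup>2 + 2 * (\<phi>2 $ v)\<^sup>2 - 1)\<^sup>2"
proof -
  note sg = assms(2) and conn = assms(3) and gi = assms(4) and vv = assms(5) and Qm = assms(6)
  note e1 = assms(7) and n1 = assms(8) and e2 = assms(9) and n2 = assms(10) and l12 = assms(11)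
  note simp1 = assms(12) and sec = assms(13) and ahyp = assms(14)
  define m where "m = real (max_degree E)"
  have invo: "\<And>x. \<sigma> (\<sigma> x) = x" and bs: "bij \<sigma>"
    and pres: "\<And>x y. E x y \<Longrightarrow> E (\<sigma> x) (\<sigma> y)"
    using gi by (auto simp: graph_involution_def)
  have Esym: "\<And>x y. E x y \<Longrightarrow> E y x" and Eirr: "\<And>x. \<not> E x x"
    using sg by (auto simp: simple_graph_def)
  have Hij: "H $ i $ j = (if E i j then 1 else 0) + (if i = j \<and> (i = v \<or> i = \<sigma> v) then Q else 0)" for i j
    by (simp add: H_def hamiltonian_def)
  have sy: "symm H" unfolding symm_def Hij using Esym by auto
  define P :: "real^'n \<Rightarrow> real^'n" where "P x = (\<chi> i. x $ \<sigma> i)" for x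
  have Pnth: "P x $ i = x $ \<sigma> i" for x i by (simp add: P_def)
  have PP: "P (P x) = x" for x by (simp add: vec_eq_iff Pnth invo)
  have Padd: "P (x + y) = P x + P y" for x y by (simp add: vec_eq_iff Pnth)
  have Pdiff: "P (x - y) = P x - P y" for x y by (simp add: vec_eq_iff Pnth)
  have Pscale: "P (c *\<^sub>R x) = c *\<^sub>R P x" for c x by (simp add: vec_eq_iff Pnth)
  have P0: "P 0 = 0" by (simp add: vec_eq_iff Pnth)
  have Paxis: "P (axis a 1) = axis (\<sigma> a) 1" for a
    by (simp add: vec_eq_iff Pnth axis_def) (metis invo)
  have Hent: "H $ \<sigma> i $ \<sigma> j = H $ i $ j" for i j
  proof -
    have e: "E (\<sigma> i) (\<sigma> j) = E i j" by (metis invo pres)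
    have d: "(\<sigma> i = \<sigma> j \<and> (\<sigma> i = v \<or> \<sigma> i = \<sigma> v)) = (i = j \<and> (i = v \<or> i = \<sigma> v))"
      by (metis invo)
    show ?thesis unfolding Hij e d by simp
  qed
  have HP: "H *v P x = P (H *v x)" for x
  proof -
    have "(H *v P x) $ i = (P (H *v x)) $ i" for i
    proof -
      have "(P (H *v x)) $ i = (\<Sum>j\<in>UNIV. H $ \<sigma> i $ j * x $ j)"
        by (simp add: Pnth matrix_vector_mult_def)
      also have "\<dots> = (\<Sum>j\<in>UNIV. H $ \<sigma> i $ \<sigma> j * x $ \<sigma> j)"
        using reind[OF bs, of "\<lambda>j. H $ \<sigma> i $ j * x $ j"] by simp
      also have "\<dots> = (H *v P x) $ i"
        by (simp add: Hent Pnth matrix_vector_mult_def)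
      finally show ?thesis by simp
    qed
    then show ?thesis by (simp add: vec_eq_iff)
  qed
  have "H *v P \<phi>1 = l1 *\<^sub>R P \<phi>1" using HP e1 Pscale by simp
  then obtain eps where eps: "P \<phi>1 = eps *\<^sub>R \<phi>1" using simp1 by blast
  have p1nz: "\<phi>1 \<noteq> 0" using n1 by auto
  have "1 *\<^sub>R \<phi>1 = (eps * eps) *\<^sub>R \<phi>1"
    using PP[of \<phi>1] by (simp add: eps Pscale)
  then have ee: "eps * eps = 1" using p1nz by (simp only: scaleR_cancel_right) simp
  have epsc: "eps = 1 \<or> eps = -1" using ee square_eq_1_iff by blast
  have eps_abs: "\<bar>eps\<bar> = 1" using epsc by auto
  have p1s: "\<phi>1 $ \<sigma> v = eps * \<phi>1 $ v"
    using arg_cong[OF eps, of "\<lambda>x. x $ v"] by (simp add: Pnth)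
  have "\<exists>y. E v y"
  proof -
    have "E\<^sup>*\<^sup>* v (\<sigma> v)" using conn by (simp add: connected_graph_def)
    then show ?thesis using vv by (cases rule: converse_rtranclpE) auto
  qed
  then have "{y. E v y} \<noteq> {}" by blast
  then have "card {y. E v y} > 0" by (simp add: card_gt_0_iff)
  then have "degree E v \<ge> 1" unfolding degree_def by simp
  then have m1: "m \<ge> 1" using deg_le[of E v] by (simp add: m_def)
  define Sm where "Sm = {x. P x = (- eps) *\<^sub>R x}"
  have subSm: "subspace Sm" unfolding subspace_def Sm_def
    by (auto simp: P0 Padd Pscale scaleR_add_right)
  have invSm: "H *v x \<in> Sm" if "x \<in> Sm" for x
    using that by (simp add: Sm_def HP[symmetric] matrix_vector_mult_scaleR del: scaleR_minus_left)
  define a0 :: "real^'n" where "a0 = axis v 1"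
  define b0 :: "real^'n" where "b0 = axis (\<sigma> v) 1"
  define x0 where "x0 = a0 - eps *\<^sub>R b0"
  have Pa0: "P a0 = b0" and Pb0: "P b0 = a0" by (simp_all add: a0_def b0_def Paxis invo)
  have "P x0 = (- eps) *\<^sub>R x0"
  proof -
    have "P x0 = b0 - eps *\<^sub>R a0" by (simp add: x0_def Pdiff Pscale Pa0 Pb0)
    also have "\<dots> = (- eps) *\<^sub>R x0"
      by (simp add: x0_def scaleR_diff_right ee)
    finally show ?thesis .
  qed
  then have x0S: "x0 \<in> Sm" by (simp add: Sm_def)
  have x0v: "x0 $ v = 1" using vv by (simp add: x0_def a0_def b0_def axis_def)
  then have "x0 \<noteq> 0" by auto
  then have "Sm \<noteq> {0}" using x0S by blast
  from max_eig[OF sy subSm invSm this] obtain z where zS: "z \<in> Sm" and nz: "norm z = 1"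
    and ez: "H *v z = (z \<bullet> (H *v z)) *\<^sub>R z"
    and bd: "\<forall>y\<in>Sm. y \<bullet> (H *v y) \<le> (z \<bullet> (H *v z)) * (norm y)\<^sup>2" by blast
  define mu where "mu = z \<bullet> (H *v z)"
  have x0H: "x0 \<bullet> (H *v x0) = 2 * Q - 2 * eps * (if E v (\<sigma> v) then 1 else 0)"
  proof -
    have "x0 \<bullet> (H *v x0) = a0 \<bullet> (H *v a0) - eps * (a0 \<bullet> (H *v b0)) - eps * (b0 \<bullet> (H *v a0))
        + (eps * eps) * (b0 \<bullet> (H *v b0))"
    proof -
      have "H *v x0 = H *v a0 - eps *\<^sub>R (H *v b0)"
        by (simp add: x0_def matrix_vector_mult_diff_distrib matrix_vector_mult_scaleR)
      then show ?thesis
        by (simp add: x0_def inner_diff_left inner_diff_right algebra_simps)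
    qed
    also have "\<dots> = 2 * Q - 2 * eps * (if E v (\<sigma> v) then 1 else 0)"
      using vv Eirr Esym[of v "\<sigma> v"] Esym[of "\<sigma> v" v]
      by (auto simp: a0_def b0_def axis_H Hij ee)
    finally show ?thesis .
  qed
  have nx0: "(norm x0)\<^sup>2 = 2"
  proof -
    have "(norm x0)\<^sup>2 = x0 \<bullet> x0" by (simp add: power2_norm_eq_inner)
    also have "\<dots> = 1 + eps * eps" using vv
      by (simp add: x0_def a0_def b0_def inner_diff_left inner_diff_right inner_axis_axis algebra_simps)
    finally show ?thesis using ee by simp
  qed
  have "eps * (if E v (\<sigma> v) then 1 else 0) \<le> 1" using epsc by auto
  then have muQ: "mu \<ge> Q - 1" using bd x0S x0H nx0 by (force simp: mu_def)
  have "is_eigenvalue H mu"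
    unfolding is_eigenvalue_def using ez nz by (intro exI[of _ z]) (auto simp: mu_def)
  moreover have "mu \<noteq> l1"
  proof
    assume "mu = l1"
    then obtain c where zc: "z = c *\<^sub>R \<phi>1" using simp1 ez by (auto simp: mu_def)
    have "P z = eps *\<^sub>R z" by (simp add: zc Pscale eps)
    moreover have "P z = (- eps) *\<^sub>R z" using zS by (simp add: Sm_def)
    ultimately have "eps *\<^sub>R z = (- eps) *\<^sub>R z" by metis
    then have "eps = - eps \<or> z = 0" by (simp only: scaleR_cancel_right)
    moreover have "eps \<noteq> 0" using ee by auto
    ultimately show False using nz by auto
  qed
  ultimately have "mu \<le> l2" using sec by blast
  then have l2m: "l2 > m" using muQ m1 Qm m_def by linarith
  have l1m: "l1 > m" using l2m l12 by linarith
  have p1p1: "\<phi>1 \<bullet> \<phi>1 = 1" using n1 by (simp add: norm_eq_1)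
  have p2p2: "\<phi>2 \<bullet> \<phi>2 = 1" using n2 by (simp add: norm_eq_1)
  have orth: "\<phi>1 \<bullet> u = 0" if "H *v u = l2 *\<^sub>R u" for u
  proof -
    have "l1 * (\<phi>1 \<bullet> u) = (H *v \<phi>1) \<bullet> u" by (simp add: e1)
    also have "\<dots> = \<phi>1 \<bullet> (H *v u)" by (rule symm_inner[OF sy])
    also have "\<dots> = l2 * (\<phi>1 \<bullet> u)" by (simp add: that)
    finally show ?thesis using l12 by simp
  qed
  define y where "y = \<phi>2 + eps *\<^sub>R P \<phi>2"
  have Hy: "H *v y = l2 *\<^sub>R y"
    by (simp add: y_def matrix_vector_right_distrib matrix_vector_mult_scaleR HP e2 Pscale
        scaleR_add_right)
  have Py: "P y = eps *\<^sub>R y"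
    by (simp add: y_def Padd Pscale PP scaleR_add_right ee)
  have ys: "y $ \<sigma> v = eps * y $ v"
    using arg_cong[OF Py, of "\<lambda>x. x $ v"] by (simp add: Pnth)
  have p1y: "\<phi>1 \<bullet> y = 0" using orth[OF Hy] .
  have y0: "y = 0"
  proof (rule ccontr)
    assume ynz: "y \<noteq> 0"
    then have yy: "y \<bullet> y > 0" by simp
    define a where "a = (if \<phi>1 $ v = 0 then 1 else y $ v)"
    define b where "b = (if \<phi>1 $ v = 0 then 0 else - \<phi>1 $ v)"
    define w where "w = a *\<^sub>R \<phi>1 + b *\<^sub>R y"
    have wv: "w $ v = 0" by (simp add: w_def a_def b_def)
    have "w $ \<sigma> v = eps * (w $ v)" by (simp add: w_def p1s ys algebra_simps)
    then have wsv: "w $ \<sigma> v = 0" using wv by simp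
    have ww: "w \<bullet> w = a * a + b * b * (y \<bullet> y)"
      using p1p1 p1y by (simp add: w_def inner_add_left inner_add_right inner_commute algebra_simps)
    have wHw: "w \<bullet> (H *v w) = a * a * l1 + b * b * l2 * (y \<bullet> y)"
      using p1p1 p1y by (simp add: w_def matrix_vector_right_distrib matrix_vector_mult_scaleR e1 Hy
          inner_add_left inner_add_right inner_commute algebra_simps)
    have pos: "a * a + b * b * (y \<bullet> y) > 0"
    proof (cases "\<phi>1 $ v = 0")
      case True then show ?thesis using yy by (simp add: a_def b_def)
    next
      case False
      then have "b * b > 0" by (auto simp: b_def zero_less_mult_iff)
      then have "b * b * (y \<bullet> y) > 0" using yy by simp
      then show ?thesis by (simp add: add_nonneg_pos)
    qed
    have "w \<bullet> (H *v w) \<le> m * (w \<bullet> w)"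
      using gersh[of E w v \<sigma> Q, OF sg wv wsv] by (simp add: H_def m_def)
    then have le: "a * a * (l1 - m) + (b * b * (y \<bullet> y)) * (l2 - m) \<le> 0"
      using ww wHw by (simp add: algebra_simps)
    have "a * a * (l1 - m) \<ge> a * a * (l2 - m)"
      using l12 by (intro mult_left_mono) auto
    then have "(a * a + b * b * (y \<bullet> y)) * (l2 - m) \<le> 0" using le by (simp add: algebra_simps)
    moreover have "(a * a + b * b * (y \<bullet> y)) * (l2 - m) > 0" using pos l2m by simp
    ultimately show False by linarith
  qed
  have "P \<phi>2 = (- eps) *\<^sub>R \<phi>2"
  proof -
    have "eps *\<^sub>R y = 0" using y0 by simp
    then have "eps *\<^sub>R \<phi>2 + P \<phi>2 = 0" by (simp add: y_def scaleR_add_right ee)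
    then show ?thesis by (simp add: eq_neg_iff_add_eq_0 add.commute)
  qed
  then have "P \<phi>2 $ v = ((- eps) *\<^sub>R \<phi>2) $ v" by simp
  then have p2s: "\<phi>2 $ \<sigma> v = - eps * \<phi>2 $ v" by (simp add: Pnth)
  have p12: "\<phi>1 \<bullet> \<phi>2 = 0" using orth[OF e2] .
  define S where "S = {x. \<phi>1 \<bullet> x = 0 \<and> \<phi>2 \<bullet> x = 0}"
  have subS: "subspace S" unfolding subspace_def S_def by (auto simp: inner_add_right)
  have invS: "H *v x \<in> S" if "x \<in> S" for x
  proof -
    have "\<phi>1 \<bullet> (H *v x) = (H *v \<phi>1) \<bullet> x" using symm_inner[OF sy] by simp
    moreover have "\<phi>2 \<bullet> (H *v x) = (H *v \<phi>2) \<bullet> x" using symm_inner[OF sy] by simp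
    ultimately show ?thesis using that by (simp add: S_def e1 e2)
  qed
  from spectral[OF sy subS invS] obtain B' where
    B': "B' \<subseteq> S" "finite B'" "pairwise orthogonal B'"
      "\<forall>b\<in>B'. norm b = 1 \<and> H *v b = (b \<bullet> (H *v b)) *\<^sub>R b" "span B' = S" by blast
  have p1B: "\<phi>1 \<notin> B'" using B'(1) p1p1 by (auto simp: S_def)
  have p2B: "\<phi>2 \<notin> B'" using B'(1) p2p2 by (auto simp: S_def)
  have p1p2: "\<phi>1 \<noteq> \<phi>2" using p12 p1p1 by auto
  define B where "B = insert \<phi>1 (insert \<phi>2 B')"
  have finB: "finite B" using B'(2) by (simp add: B_def)
  have poB: "pairwise orthogonal B" using B'(1,3) p12
    by (auto simp: B_def pairwise_insert S_def orthogonal_def inner_commute)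
  have mu1: "\<phi>1 \<bullet> (H *v \<phi>1) = l1" using p1p1 by (simp add: e1)
  have mu2: "\<phi>2 \<bullet> (H *v \<phi>2) = l2" using p2p2 by (simp add: e2)
  have ebB: "\<forall>b\<in>B. norm b = 1 \<and> H *v b = (b \<bullet> (H *v b)) *\<^sub>R b"
    using B'(4) n1 n2 e1 e2 mu1 mu2 by (auto simp: B_def)
  have spB: "span B = UNIV"
  proof -
    have "x \<in> span B" for x
    proof -
      have "x - (\<phi>1 \<bullet> x) *\<^sub>R \<phi>1 - (\<phi>2 \<bullet> x) *\<^sub>R \<phi>2 \<in> S"
        using p1p1 p2p2 p12 by (simp add: S_def inner_diff_right inner_commute)
      then have "x - (\<phi>1 \<bullet> x) *\<^sub>R \<phi>1 - (\<phi>2 \<bullet> x) *\<^sub>R \<phi>2 \<in> span B'" using B'(5) by simp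
      then have "x - (\<phi>1 \<bullet> x) *\<^sub>R \<phi>1 \<in> span (insert \<phi>2 B')"
        by (auto simp: span_breakdown_eq)
      then show ?thesis by (auto simp: B_def span_breakdown_eq)
    qed
    then show ?thesis by auto
  qed
  define t where "t = pi / (l1 - l2)"
  define X where "X = exp (\<i> * complex_of_real (t * l2))"
  have nX: "cmod X = 1" by (simp add: X_def)
  have X1: "exp (\<i> * complex_of_real (t * l1)) = - X"
  proof -
    have "t * l1 = t * l2 + pi" using l12 by (simp add: t_def field_simps)
    then have "\<i> * complex_of_real (t * l1) = \<i> * complex_of_real (t * l2) + \<i> * complex_of_real pi"
      by (simp add: distrib_left)
    then show ?thesis by (simp add: X_def exp_add exp_pi_i')
  qed
  define R where "R = (\<Sum>b\<in>B'. complex_of_real (b$v * b$\<sigma> v) * exp (\<i> * complex_of_real (t * (b \<bullet> (H *v b)))))"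
  have ent: "exp_itH_entry H t v (\<sigma> v) =
      complex_of_real (\<phi>1$v * \<phi>1$\<sigma> v) * (- X) + complex_of_real (\<phi>2$v * \<phi>2$\<sigma> v) * X + R"
    using entry_expand[OF finB poB ebB spB, of t v "\<sigma> v"] B'(2) p1B p2B p1p2
    by (simp add: B_def R_def mu1 mu2 X1 X_def del: of_real_mult)
  define a where "a = (\<phi>1 $ v)\<^sup>2 + (\<phi>2 $ v)\<^sup>2"
  have main2: "complex_of_real (\<phi>1$v * \<phi>1$\<sigma> v) * (- X) + complex_of_real (\<phi>2$v * \<phi>2$\<sigma> v) * X
      = - complex_of_real (eps * a) * X"
    by (simp add: p1s p2s a_def power2_eq_square algebra_simps)
  have a0: "a \<ge> 0" by (simp add: a_def)
  have nmain: "cmod (- complex_of_real (eps * a) * X) = a"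
    by (simp add: norm_mult nX abs_mult eps_abs a0 del: of_real_mult)
  have pv: "(\<Sum>b\<in>B'. (b$v)\<^sup>2) = 1 - a"
    using parseval[OF finB poB _ spB, of v] ebB B'(2) p1B p2B p1p2 by (simp add: B_def a_def)
  have pv': "(\<Sum>b\<in>B'. (b$\<sigma> v)\<^sup>2) = 1 - a"
  proof -
    have "(\<phi>1 $ \<sigma> v)\<^sup>2 + (\<phi>2 $ \<sigma> v)\<^sup>2 = a"
      using epsc by (auto simp: p1s p2s a_def power2_eq_square)
    then show ?thesis
      using parseval[OF finB poB _ spB, of "\<sigma> v"] ebB B'(2) p1B p2B p1p2 by (simp add: B_def)
  qed
  have nR: "cmod R \<le> 1 - a"
  proof -
    have "cmod R \<le> (\<Sum>b\<in>B'. cmod (complex_of_real (b$v * b$\<sigma> v) * exp (\<i> * complex_of_real (t * (b \<bullet> (H *v b))))))"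
      unfolding R_def by (rule norm_sum)
    also have "\<dots> = (\<Sum>b\<in>B'. \<bar>b$v * b$\<sigma> v\<bar>)" by (simp add: norm_mult abs_mult)
    also have "\<dots> \<le> (\<Sum>b\<in>B'. ((b$v)\<^sup>2 + (b$\<sigma> v)\<^sup>2) / 2)"
    proof (intro sum_mono)
      fix b :: "real^'n"
      have "0 \<le> (\<bar>b$v\<bar> - \<bar>b$\<sigma> v\<bar>)\<^sup>2" by (rule zero_le_power2)
      then have "2 * (\<bar>b$v\<bar> * \<bar>b$\<sigma> v\<bar>) \<le> \<bar>b$v\<bar>\<^sup>2 + \<bar>b$\<sigma> v\<bar>\<^sup>2"
        by (simp add: power2_diff)
      then show "\<bar>b$v * b$\<sigma> v\<bar> \<le> ((b$v)\<^sup>2 + (b$\<sigma> v)\<^sup>2) / 2"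
        by (simp add: abs_mult)
    qed
    also have "\<dots> = 1 - a" using pv pv' by (simp add: sum.distrib sum_divide_distrib[symmetric])
    finally show ?thesis .
  qed
  have ge: "cmod (exp_itH_entry H t v (\<sigma> v)) \<ge> 2 * a - 1"
  proof -
    have "cmod (- complex_of_real (eps * a) * X) - cmod R \<le> cmod (- complex_of_real (eps * a) * X + R)"
      by (rule norm_diff_ineq)
    then show ?thesis using ent main2 nmain nR by simp
  qed
  have a2: "2 * a - 1 \<ge> 0" using ahyp by (simp add: a_def)
  have "(2 * a - 1)\<^sup>2 \<le> (cmod (exp_itH_entry H t v (\<sigma> v)))\<^sup>2"
    using ge a2 by (rule power_mono)
  then show ?thesis by (simp add: transfer_prob_def t_def a_def algebra_simps)
qed


end
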